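(* Let $V$ be a vector space of uncountable dimension over a field $\mathbb{F}$, and let $u$ be an endomorphism of $V$ with no dominant eigenvalue. Then $V^u$ has a good stratification.
   Context: A scalar $\lambda$ is a dominant eigenvalue of $u$ if $\operatorname{rk}(u-\lambda\,\mathrm{id}_V)<\dim V$. $V^u$ is the $\mathbb{F}[t]$-module with underlying space $V$ and $t\cdot x:=u(x)$. A stratification of a non-zero $\mathbb{F}[t]$-module $M$ is an increasing family $(M_\alpha)_{\alpha\in D}$ of submodules indexed by a well-ordered set $D$ such that each quotient $M_\alpha/\sum_{\beta<\alpha}M_\beta$ is non-zero and monogenous (cyclic), and $M=\sum_{\alpha\in D}M_\alpha$; its dimension sequence is $n_\alpha:=\dim_{\mathbb{F}}(M_\alpha/\sum_{\beta<\alpha}M_\beta)\in\mathbb{N}^*\cup\{+\infty\}$. It is good if (a) $n_\alpha\ge 2$ whenever $\alpha$ is the minimum of $D$ or the successor of some element of $D$, and (b) $D$ has no maximum. *)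

theory Defs
  imports Complex_Main "HOL-Library.Extended_Nat"
begin

text \<open>Vector space V = the whole type 'b over the field 'a, with scalar
multiplication scale (locale vector_space from HOL.Vector_Spaces).\<close>

definition basis_of :: "('a::field \<Rightarrow> 'b::ab_group_add \<Rightarrow> 'b) \<Rightarrow> 'b set \<Rightarrow> 'b set \<Rightarrow> bool" where
  "basis_of scale S B \<longleftrightarrow> B \<subseteq> S \<and> \<not> module.dependent scale B \<and> module.span scale B = S"

definition dim_less :: "('a::field \<Rightarrow> 'b::ab_group_add \<Rightarrow> 'b) \<Rightarrow> 'b set \<Rightarrow> 'b set \<Rightarrow> bool" where
  "dim_less scale S T \<longleftrightarrow>
     (\<exists>B C. basis_of scale S B \<and> basis_of scale T C \<and> (card_of B, card_of C) \<in> ordLess)"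

definition dominant_eigenvalue :: "('a::field \<Rightarrow> 'b::ab_group_add \<Rightarrow> 'b) \<Rightarrow> ('b \<Rightarrow> 'b) \<Rightarrow> 'a \<Rightarrow> bool" where
  "dominant_eigenvalue scale u lam \<longleftrightarrow> dim_less scale (range (\<lambda>x. u x - scale lam x)) UNIV"

definition submodule :: "('a::field \<Rightarrow> 'b::ab_group_add \<Rightarrow> 'b) \<Rightarrow> ('b \<Rightarrow> 'b) \<Rightarrow> 'b set \<Rightarrow> bool" where
  "submodule scale u N \<longleftrightarrow> module.subspace scale N \<and> u ` N \<subseteq> N"

definition msum :: "('a::field \<Rightarrow> 'b::ab_group_add \<Rightarrow> 'b) \<Rightarrow> 'b set set \<Rightarrow> 'b set" where
  "msum scale F = module.span scale (\<Union>F)"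

definition indep_mod :: "('a::field \<Rightarrow> 'b::ab_group_add \<Rightarrow> 'b) \<Rightarrow> 'b set \<Rightarrow> 'b set \<Rightarrow> bool" where
  "indep_mod scale N S \<longleftrightarrow> finite S \<and>
     (\<forall>c. (\<Sum>s\<in>S. scale (c s) s) \<in> N \<longrightarrow> (\<forall>s\<in>S. c s = 0))"

text \<open>dim_F (M / N) in N \<union> {infinity}, for subspaces N \<subseteq> M.\<close>
definition qdim :: "('a::field \<Rightarrow> 'b::ab_group_add \<Rightarrow> 'b) \<Rightarrow> 'b set \<Rightarrow> 'b set \<Rightarrow> enat" where
  "qdim scale M N = Sup {enat (card S) | S. S \<subseteq> M \<and> indep_mod scale N S}"

text \<open>M / N is monogenous (cyclic) as F[t]-module: generated by the class of one x.\<close>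
definition monogenous_quot :: "('a::field \<Rightarrow> 'b::ab_group_add \<Rightarrow> 'b) \<Rightarrow> ('b \<Rightarrow> 'b) \<Rightarrow> 'b set \<Rightarrow> 'b set \<Rightarrow> bool" where
  "monogenous_quot scale u M N \<longleftrightarrow>
     (\<exists>x\<in>M. M = module.span scale (N \<union> {(u ^^ k) x | k. True}))"

definition stratification ::
  "('a::field \<Rightarrow> 'b::ab_group_add \<Rightarrow> 'b) \<Rightarrow> ('b \<Rightarrow> 'b) \<Rightarrow> ('d \<times> 'd) set \<Rightarrow> ('d \<Rightarrow> 'b set) \<Rightarrow> bool" where
  "stratification scale u r Mf \<longleftrightarrow>
     Well_order r \<and>
     (\<forall>\<alpha>\<in>Field r. submodule scale u (Mf \<alpha>)) \<and>
     (\<forall>\<alpha>\<in>Field r. \<forall>\<beta>\<in>Field r. (\<beta>, \<alpha>) \<in> r \<longrightarrow> Mf \<beta> \<subseteq> Mf \<alpha>) \<and>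
     (\<forall>\<alpha>\<in>Field r.
        let N = msum scale {Mf \<beta> | \<beta>. \<beta> \<in> Field r \<and> (\<beta>, \<alpha>) \<in> r \<and> \<beta> \<noteq> \<alpha>} in
        \<not> Mf \<alpha> \<subseteq> N \<and> monogenous_quot scale u (Mf \<alpha>) N) \<and>
     msum scale (Mf ` Field r) = UNIV"

definition strat_dim ::
  "('a::field \<Rightarrow> 'b::ab_group_add \<Rightarrow> 'b) \<Rightarrow> ('d \<times> 'd) set \<Rightarrow> ('d \<Rightarrow> 'b set) \<Rightarrow> 'd \<Rightarrow> enat" where
  "strat_dim scale r Mf \<alpha> =
     qdim scale (Mf \<alpha>) (msum scale {Mf \<beta> | \<beta>. \<beta> \<in> Field r \<and> (\<beta>, \<alpha>) \<in> r \<and> \<beta> \<noteq> \<alpha>})"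

definition is_minimum :: "('d \<times> 'd) set \<Rightarrow> 'd \<Rightarrow> bool" where
  "is_minimum r \<alpha> \<longleftrightarrow> \<alpha> \<in> Field r \<and> (\<forall>\<gamma>\<in>Field r. (\<alpha>, \<gamma>) \<in> r)"

definition is_successor :: "('d \<times> 'd) set \<Rightarrow> 'd \<Rightarrow> 'd \<Rightarrow> bool" where
  "is_successor r \<alpha> \<beta> \<longleftrightarrow> \<alpha> \<in> Field r \<and> \<beta> \<in> Field r \<and> (\<beta>, \<alpha>) \<in> r \<and> \<beta> \<noteq> \<alpha> \<and>
     (\<forall>\<gamma>\<in>Field r. (\<beta>, \<gamma>) \<in> r \<and> \<beta> \<noteq> \<gamma> \<longrightarrow> (\<alpha>, \<gamma>) \<in> r)"

definition good_stratification ::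
  "('a::field \<Rightarrow> 'b::ab_group_add \<Rightarrow> 'b) \<Rightarrow> ('b \<Rightarrow> 'b) \<Rightarrow> ('d \<times> 'd) set \<Rightarrow> ('d \<Rightarrow> 'b set) \<Rightarrow> bool" where
  "good_stratification scale u r Mf \<longleftrightarrow>
     stratification scale u r Mf \<and>
     (\<forall>\<alpha>\<in>Field r. (is_minimum r \<alpha> \<or> (\<exists>\<beta>\<in>Field r. is_successor r \<alpha> \<beta>))
                    \<longrightarrow> strat_dim scale r Mf \<alpha> \<ge> 2) \<and>
     (\<forall>\<alpha>\<in>Field r. \<exists>\<beta>\<in>Field r. (\<alpha>, \<beta>) \<in> r \<and> \<alpha> \<noteq> \<beta>)"

end

theory Submission
  imports Defs "HOL-Algebra.Free_Abelian_Groups"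
begin


lemma card_insert_less:
  assumes "|X| <o |B|" "infinite B"
  shows "|insert b X| <o |B|"
proof (cases "finite X")
  case True
  then have "finite (insert b X)" by simp
  then show ?thesis by (rule finite_ordLess_infinite2[OF _ assms(2)])
next
  case False
  show ?thesis by (rule ordIso_ordLess_trans[OF infinite_card_of_insert[OF False] assms(1)])
qed
lemma countable_card_of_nat': "countable A \<longleftrightarrow> |A| \<le>o card_of (UNIV::nat set)"
proof
  assume "countable A"
  then obtain f :: "_ \<Rightarrow> nat" where f: "inj_on f A" unfolding countable_def by blast
  have "\<exists>f. inj_on f A \<and> f ` A \<subseteq> (UNIV::nat set)" using f by blast
  then show "|A| \<le>o card_of (UNIV::nat set)" by (rule card_of_ordLeq[THEN iffD1])
next
  assume "|A| \<le>o card_of (UNIV::nat set)"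
  then have "\<exists>f. inj_on f A \<and> f ` A \<subseteq> (UNIV::nat set)" by (rule card_of_ordLeq[THEN iffD2])
  then obtain f :: "_ \<Rightarrow> nat" where "inj_on f A" by blast
  then show "countable A" by (rule countableI)
qed

definition AT :: "'b set \<Rightarrow> (('b option \<times> nat) \<times> nat) set" where
  "AT T = (insert None (Some ` T) \<times> UNIV) \<times> UNIV"

lemma times_nat_iso:
  assumes "infinite A"
  shows "card_of (A \<times> (UNIV::nat set)) =o card_of A"
proof -
  have n1: "card_of (UNIV::nat set) \<le>o card_of A" using assms by (simp only: infinite_iff_card_of_nat)
  show ?thesis using card_of_Times_infinite[OF assms UNIV_not_empty n1] by (rule conjunct1)
qed

lemma AT_le:
  assumes "infinite T"
  shows "|AT T| \<le>o |T|"
proof -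
  have inj: "inj_on Some T" by simp
  have infS: "infinite (Some ` T)"
  proof
    assume "finite (Some ` T)"
    then have "finite T" by (rule finite_imageD[OF _ inj])
    with assms show False by simp
  qed
  have infO: "infinite (insert None (Some ` T))" using infS by simp
  have O: "card_of (insert None (Some ` T)) \<le>o |T|"
    by (rule ordIso_ordLeq_trans[OF infinite_card_of_insert[OF infS] card_of_image])
  have infX1: "infinite (insert None (Some ` T) \<times> (UNIV::nat set))"
  proof
    assume "finite (insert None (Some ` T) \<times> (UNIV::nat set))"
    then have "finite (insert None (Some ` T))" by (rule finite_cartesian_productD1) simp
    with infO show False by simp
  qed
  have "|AT T| =o card_of (insert None (Some ` T))" unfolding AT_def
    by (rule ordIso_transitive[OF times_nat_iso[OF infX1] times_nat_iso[OF infO]])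
  then show ?thesis by (rule ordIso_ordLeq_trans[OF _ O])
qed

lemma AT_less:
  assumes "|T| <o |B|" "uncountable B"
  shows "|AT T| <o |B|"
proof (cases "countable T")
  case True
  then have "countable (AT T)" unfolding AT_def
    by (intro countable_SIGMA countable_insert countable_image countableI_type)
  then have c: "|AT T| \<le>o card_of (UNIV::nat set)" by (rule countable_card_of_nat'[THEN iffD1])
  have "\<not> |B| \<le>o |AT T|"
  proof
    assume "|B| \<le>o |AT T|"
    then have "|B| \<le>o card_of (UNIV::nat set)" by (rule ordLeq_transitive[OF _ c])
    then have "countable B" by (rule countable_card_of_nat'[THEN iffD2])
    then show False using assms(2) by simp
  qed
  then show ?thesis by (rule iffD1[OF not_ordLeq_iff_ordLess[OF card_of_Well_order card_of_Well_order]])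
next
  case False
  then have "infinite T" using countable_finite by blast
  then show ?thesis by (rule ordLeq_ordLess_trans[OF AT_le assms(1)])
qed



context vector_space
begin

lemma span_finite_sub:
  assumes "v \<in> span S"
  shows "\<exists>F. finite F \<and> F \<subseteq> S \<and> v \<in> span F"
proof -
  from assms obtain t r where v: "v = (\<Sum>a\<in>t. r a *s a)" and t: "finite t" "t \<subseteq> S"
    unfolding span_explicit by blast
  have "v \<in> span t" unfolding v by (intro span_sum span_scale span_base)
  with t show ?thesis by blast
qed

lemma indep_card_le:
  assumes ind: "independent B'" and sub: "B' \<subseteq> span S"
  shows "|B'| \<le>o |S|"
proof (cases "finite S")
  case True
  from independent_span_bound[OF True ind sub] have fB: "finite B'" and c: "card B' \<le> card S" by auto
  from card_le_inj[OF fB True c] obtain f where f: "f ` B' \<subseteq> S" "inj_on f B'" by blast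
  have "\<exists>f. inj_on f B' \<and> f ` B' \<subseteq> S" using f by blast
  then show ?thesis by (rule card_of_ordLeq[THEN iffD1])
next
  case False
  let ?A = "\<lambda>F. B' \<inter> span F"
  have cover: "B' \<subseteq> (\<Union>F\<in>Fpow S. ?A F)"
  proof
    fix v assume v: "v \<in> B'"
    then have "v \<in> span S" using sub by blast
    then obtain F where "finite F" "F \<subseteq> S" "v \<in> span F" using span_finite_sub by blast
    then show "v \<in> (\<Union>F\<in>Fpow S. ?A F)" using v unfolding Fpow_def by blast
  qed
  have I: "|Fpow S| \<le>o |S|"
    using card_of_Fpow_infinite[OF False] by (rule ordIso_imp_ordLeq)
  have each: "\<forall>F\<in>Fpow S. |?A F| \<le>o |S|"
  proof
    fix F assume "F \<in> Fpow S"
    then have fF: "finite F" unfolding Fpow_def by blast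
    have "independent (?A F)" using ind by (rule independent_mono) blast
    then have "finite (?A F)" using independent_span_bound[OF fF] by blast
    then show "|?A F| \<le>o |S|" by (rule ordLess_imp_ordLeq[OF finite_ordLess_infinite2[OF _ False]])
  qed
  have "|\<Union>F\<in>Fpow S. ?A F| \<le>o |S|" by (rule card_of_UNION_ordLeq_infinite[OF False I each])
  then show ?thesis by (rule ordLeq_transitive[OF card_of_mono1[OF cover]])
qed

end


locale strat = vector_space scale for scale :: "'a::field \<Rightarrow> 'b::ab_group_add \<Rightarrow> 'b" (infixr "*s" 75) +
  fixes u :: "'b \<Rightarrow> 'b"
  assumes lin: "Vector_Spaces.linear scale scale u"
begin

lemma mh: "module_hom scale scale u"
  using lin by (simp add: linear_iff_module_hom)

lemma uadd: "u (x + y) = u x + u y" by (rule module_hom.add[OF mh])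
lemma uscale: "u (c *s x) = c *s u x" by (rule module_hom.scale[OF mh])
lemma udiff: "u (x - y) = u x - u y" by (rule module_hom.diff[OF mh])

definition good :: "'b set \<Rightarrow> 'b \<Rightarrow> bool" where
  "good N y \<longleftrightarrow> y \<noteq> u y \<and> indep_mod scale N {y, u y}"

lemma scale_mem:
  assumes "subspace N" "c \<noteq> 0" "c *s x \<in> N"
  shows "x \<in> N"
proof -
  have "x = inverse c *s (c *s x)" using assms(2) by simp
  then show ?thesis using subspace_scale[OF assms(1) assms(3)] by metis
qed

lemma eigen_mod:
  assumes N: "subspace N" and y: "y \<notin> N" and ng: "\<not> good N y"
  shows "\<exists>lam. u y - lam *s y \<in> N"
proof (cases "y = u y")
  case True
  then show ?thesis using subspace_0[OF N] by (intro exI[of _ 1]) simp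
next
  case False
  then have "\<not> indep_mod scale N {y, u y}" using ng unfolding good_def by blast
  then obtain c where c: "(\<Sum>s\<in>{y, u y}. c s *s s) \<in> N" and nz: "\<not> (\<forall>s\<in>{y, u y}. c s = 0)"
    unfolding indep_mod_def by blast
  have sum: "(\<Sum>s\<in>{y, u y}. c s *s s) = c y *s y + c (u y) *s u y" using False by simp
  show ?thesis
  proof (cases "c (u y) = 0")
    case True
    then have "c y \<noteq> 0" using nz by simp
    moreover have "c y *s y \<in> N" using c sum True by simp
    ultimately have "y \<in> N" using scale_mem[OF N] by blast
    with y show ?thesis by blast
  next
    case cu: False
    let ?l = "- c y / c (u y)"
    have "c (u y) *s (u y - ?l *s y) = c y *s y + c (u y) *s u y"
      using cu by (simp add: scale_right_distrib scale_right_diff_distrib add.commute)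
    then have "c (u y) *s (u y - ?l *s y) \<in> N" using c sum by simp
    then show ?thesis using scale_mem[OF N cu] by blast
  qed
qed

lemma const_eigen:
  assumes N: "subspace N" and inv: "\<And>v. v \<in> N \<Longrightarrow> u v \<in> N"
    and y0: "y0 \<notin> N" and ng: "\<And>y. \<not> good N y"
  shows "\<exists>lam. \<forall>z. u z - lam *s z \<in> N"
proof -
  obtain l0 where l0: "u y0 - l0 *s y0 \<in> N" using eigen_mod[OF N y0 ng] by blast
  have "u z - l0 *s z \<in> N" for z
  proof (cases "z \<in> N")
    case True
    then show ?thesis using inv[OF True] subspace_diff[OF N] subspace_scale[OF N] by blast
  next
    case zN: False
    show ?thesis
    proof (cases "\<exists>c. z - c *s y0 \<in> N")
      case True
      then obtain c where c: "z - c *s y0 \<in> N" by blast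
      have eq: "u z - l0 *s z = u (z - c *s y0) + c *s (u y0 - l0 *s y0) - l0 *s (z - c *s y0)"
        by (simp add: udiff uscale scale_right_diff_distrib algebra_simps)
      show ?thesis unfolding eq
        by (intro subspace_diff[OF N] subspace_add[OF N] subspace_scale[OF N] inv c l0)
    next
      case nc: False
      obtain lz where lz: "u z - lz *s z \<in> N" using eigen_mod[OF N zN ng] by blast
      have wN: "z + y0 \<notin> N" using nc by (metis diff_minus_eq_add scale_minus_left scale_one)
      obtain mu where mu: "u (z + y0) - mu *s (z + y0) \<in> N" using eigen_mod[OF N wN ng] by blast
      have eqD: "(lz - mu) *s z + (l0 - mu) *s y0 = (u (z + y0) - mu *s (z + y0)) - (u z - lz *s z) - (u y0 - l0 *s y0)"
        by (simp add: uadd scale_right_distrib algebra_simps)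
      have D: "(lz - mu) *s z + (l0 - mu) *s y0 \<in> N" unfolding eqD
        by (intro subspace_diff[OF N] mu lz l0)
      have lzmu: "lz = mu"
      proof (rule ccontr)
        assume ne: "lz \<noteq> mu"
        let ?c = "- (l0 - mu) / (lz - mu)"
        have "(lz - mu) *s (z - ?c *s y0) = (lz - mu) *s z + (l0 - mu) *s y0"
          using ne by (simp add: scale_right_diff_distrib flip: scale_minus_left)
        then have "(lz - mu) *s (z - ?c *s y0) \<in> N" using D by simp
        then have "z - ?c *s y0 \<in> N" using scale_mem[OF N, of "lz - mu" "z - ?c *s y0"] ne by simp
        with nc show False by blast
      qed
      have l0mu: "l0 = mu"
      proof (rule ccontr)
        assume ne: "l0 \<noteq> mu"
        have "(l0 - mu) *s y0 \<in> N" using D lzmu by simp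
        then have "y0 \<in> N" using scale_mem[OF N, of "l0 - mu" y0] ne by simp
        with y0 show False by blast
      qed
      show ?thesis using lz lzmu l0mu by simp
    qed
  qed
  then show ?thesis by blast
qed

lemma span_inv:
  assumes "u ` S \<subseteq> S" "v \<in> span S"
  shows "u v \<in> span S"
proof -
  have "u v \<in> u ` span S" using assms(2) by blast
  also have "\<dots> = span (u ` S)" using module_hom.span_image[OF mh] by simp
  also have "\<dots> \<subseteq> span S" using span_mono[OF assms(1)] .
  finally show ?thesis .
qed

lemma range_subspace: "subspace (range (\<lambda>z. u z - lam *s z))"
  unfolding subspace_def
proof (intro conjI allI ballI)
  show "0 \<in> range (\<lambda>z. u z - lam *s z)"
    using module_hom.zero[OF mh] by (intro image_eqI[of _ _ 0]) simp_all
next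
  fix x y assume "x \<in> range (\<lambda>z. u z - lam *s z)" "y \<in> range (\<lambda>z. u z - lam *s z)"
  then obtain a b where ab: "x = u a - lam *s a" "y = u b - lam *s b" by blast
  have "(u a - lam *s a) + (u b - lam *s b) = u (a + b) - lam *s (a + b)"
    by (simp add: uadd scale_right_distrib algebra_simps)
  then have "x + y = u (a + b) - lam *s (a + b)" unfolding ab .
  then show "x + y \<in> range (\<lambda>z. u z - lam *s z)" by blast
next
  fix c x assume "x \<in> range (\<lambda>z. u z - lam *s z)"
  then obtain a where a: "x = u a - lam *s a" by blast
  have "c *s (u a - lam *s a) = u (c *s a) - lam *s (c *s a)"
    by (simp add: uscale scale_right_diff_distrib mult.commute)
  then have "c *s x = u (c *s a) - lam *s (c *s a)" unfolding a .
  then show "c *s x \<in> range (\<lambda>z. u z - lam *s z)" by blast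
qed

lemma exists_good:
  assumes indB: "independent B" and spB: "span B = UNIV"
    and ndom: "\<And>lam. \<not> dominant_eigenvalue scale u lam"
    and small: "|S| <o |B|" and inv: "u ` S \<subseteq> S"
  shows "\<exists>y. good (span S) y"
proof (rule ccontr)
  assume "\<not> (\<exists>y. good (span S) y)"
  then have ng: "\<And>y. \<not> good (span S) y" by blast
  have "\<exists>y0. y0 \<notin> span S"
  proof (rule ccontr)
    assume "\<not> (\<exists>y0. y0 \<notin> span S)"
    then have "B \<subseteq> span S" by blast
    then have "|B| \<le>o |S|" by (rule indep_card_le[OF indB])
    with small show False using not_ordLess_ordLeq by blast
  qed
  then obtain y0 where y0: "y0 \<notin> span S" by blast
  obtain lam where lam: "\<forall>z. u z - lam *s z \<in> span S"
    using const_eigen[OF subspace_span span_inv[OF inv] y0 ng] by blast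
  let ?R = "range (\<lambda>z. u z - lam *s z)"
  obtain B' where B': "B' \<subseteq> ?R" "independent B'" "?R \<subseteq> span B'"
    using basis_exists[of ?R] by metis
  have "span B' \<subseteq> ?R" by (rule span_minimal[OF B'(1) range_subspace])
  then have bB': "basis_of scale ?R B'" unfolding basis_of_def using B' by blast
  have bB: "basis_of scale UNIV B" unfolding basis_of_def using indB spB by blast
  have "B' \<subseteq> span S" using B'(1) lam by blast
  then have "|B'| \<le>o |S|" by (rule indep_card_le[OF B'(2)])
  then have "|B'| <o |B|" using small by (rule ordLeq_ordLess_trans)
  then have "dominant_eigenvalue scale u lam"
    unfolding dominant_eigenvalue_def dim_less_def using bB' bB by blast
  with ndom show False by blast
qed

end


definition olt :: "'c rel \<Rightarrow> 'c option \<Rightarrow> 'c option \<Rightarrow> bool" where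
  "olt W a c \<longleftrightarrow> (a = None \<and> c \<noteq> None) \<or> (\<exists>b d. a = Some b \<and> c = Some d \<and> (b, d) \<in> W \<and> b \<noteq> d)"

definition Dom :: "'c rel \<Rightarrow> ('c option \<times> nat) set" where
  "Dom W = {p. case fst p of None \<Rightarrow> True | Some b \<Rightarrow> b \<in> Field W}"

definition Rel :: "'c rel \<Rightarrow> (('c option \<times> nat) \<times> ('c option \<times> nat)) set" where
  "Rel W = {(p, q). p \<in> Dom W \<and> q \<in> Dom W \<and> (olt W (fst p) (fst q) \<or> (fst p = fst q \<and> snd p \<le> snd q))}"

lemma wo_props:
  assumes "Well_order W"
  shows "trans W" "antisym W" "total_on (Field W) W" "wf (W - Id)" "refl_on (Field W) W"
  using assms unfolding well_order_on_def linear_order_on_def partial_order_on_def preorder_on_def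
  by auto

lemma olt_trans:
  assumes W: "Well_order W" and "olt W a b" "olt W b c"
  shows "olt W a c"
proof -
  note wp = wo_props[OF W]
  show ?thesis using assms(2,3) unfolding olt_def
  proof (elim disjE exE conjE)
    fix x y z w assume h: "a = Some x" "b = Some y" "(x, y) \<in> W" "x \<noteq> y" "b = Some z" "c = Some w" "(z, w) \<in> W" "z \<noteq> w"
    then have yz: "y = z" by simp
    have "(x, w) \<in> W" using h yz wp(1) unfolding trans_def by blast
    moreover have "x \<noteq> w"
    proof
      assume "x = w"
      then have "(y, x) \<in> W" using h yz by simp
      then have "x = y" using h(3) wp(2) unfolding antisym_def by blast
      with h(4) show False by simp
    qed
    ultimately show "(a = None \<and> c \<noteq> None) \<or> (\<exists>b d. a = Some b \<and> c = Some d \<and> (b, d) \<in> W \<and> b \<noteq> d)"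
      using h by blast
  qed auto
qed

lemma olt_irrefl: "\<not> olt W a a"
  unfolding olt_def by auto

lemma olt_asym:
  assumes W: "Well_order W" and "olt W a b" "olt W b a"
  shows False
  using olt_trans[OF W assms(2,3)] olt_irrefl by metis

lemma olt_total:
  assumes W: "Well_order W" and "(a, 0::nat) \<in> Dom W" "(c, 0::nat) \<in> Dom W" "a \<noteq> c"
  shows "olt W a c \<or> olt W c a"
proof (cases a)
  case None
  then show ?thesis using assms(4) unfolding olt_def by (cases c) auto
next
  case (Some b)
  show ?thesis
  proof (cases c)
    case None
    then show ?thesis using Some unfolding olt_def by auto
  next
    case (Some d)
    have "b \<in> Field W" "d \<in> Field W" using assms(2,3) \<open>a = Some b\<close> Some unfolding Dom_def by auto
    moreover have "b \<noteq> d" using assms(4) \<open>a = Some b\<close> Some by simp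
    ultimately have "(b, d) \<in> W \<or> (d, b) \<in> W" using wo_props(3)[OF W] unfolding total_on_def by blast
    then show ?thesis using \<open>a = Some b\<close> Some \<open>b \<noteq> d\<close> unfolding olt_def by auto
  qed
qed

lemma Dom_fst: "p \<in> Dom W \<longleftrightarrow> (fst p, 0::nat) \<in> Dom W"
  unfolding Dom_def by simp

lemma Rel_refl: "p \<in> Dom W \<Longrightarrow> (p, p) \<in> Rel W"
  unfolding Rel_def by auto

lemma Field_Rel: "Field (Rel W) = Dom W"
proof
  show "Field (Rel W) \<subseteq> Dom W" unfolding Rel_def Field_def by auto
  show "Dom W \<subseteq> Field (Rel W)" using Rel_refl by (blast intro: FieldI1)
qed

lemma wf_olt:
  assumes W: "Well_order W"
  shows "wf {(a, c). olt W a c}"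
proof -
  let ?r1 = "{(a, c). a = None \<and> c \<noteq> (None :: 'c option)}"
  let ?r2 = "map_prod Some Some ` (W - Id)"
  have sub: "{(a, c). olt W a c} \<subseteq> ?r1 \<union> ?r2" unfolding olt_def by auto
  have w1: "wf ?r1"
    by (rule wf_subset[OF wf_measure[of "\<lambda>a. if a = None then 0 else (1::nat)"]]) auto
  have w2: "wf ?r2" by (rule wf_map_prod_image[OF wo_props(4)[OF W]]) simp
  have "wf (?r1 \<union> ?r2)" by (rule wf_Un[OF w1 w2]) auto
  then show ?thesis by (rule wf_subset[OF _ sub])
qed

lemma Rel_strict: "(p, q) \<in> Rel W - Id \<longleftrightarrow>
   p \<in> Dom W \<and> q \<in> Dom W \<and> (olt W (fst p) (fst q) \<or> (fst p = fst q \<and> snd p < snd q))"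
  unfolding Rel_def using olt_irrefl[of W "fst p"] by (cases p; cases q) auto

lemma wf_Rel:
  assumes W: "Well_order W"
  shows "wf (Rel W - Id)"
proof -
  have "Rel W - Id \<subseteq> {(a, c). olt W a c} <*lex*> less_than"
  proof
    fix x assume x: "x \<in> Rel W - Id"
    obtain p q where pq: "x = (p, q)" by (cases x)
    obtain a b where p: "p = (a, b)" by (cases p)
    obtain c d where q: "q = (c, d)" by (cases q)
    from x have "(p, q) \<in> Rel W - Id" using pq by simp
    then show "x \<in> {(a, c). olt W a c} <*lex*> less_than"
      unfolding Rel_strict pq p q by auto
  qed
  then show ?thesis by (rule wf_subset[OF wf_lex_prod[OF wf_olt[OF W] wf_less_than]])
qed

lemma Well_order_Rel:
  assumes W: "Well_order W"
  shows "Well_order (Rel W)"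
  unfolding well_order_on_def linear_order_on_def partial_order_on_def preorder_on_def Field_Rel
proof (intro conjI)
  show "Rel W \<subseteq> Dom W \<times> Dom W" unfolding Rel_def by auto
  show "refl_on (Dom W) (Rel W)" unfolding refl_on_def Rel_def by auto
  show "trans (Rel W)" unfolding trans_def Rel_def using olt_trans[OF W] by auto
  show "antisym (Rel W)" unfolding antisym_def Rel_def using olt_asym[OF W] olt_irrefl by fastforce
  show "total_on (Dom W) (Rel W)" unfolding total_on_def
  proof (intro ballI impI)
    fix p q assume p: "p \<in> Dom W" and q: "q \<in> Dom W" and ne: "p \<noteq> q"
    show "(p, q) \<in> Rel W \<or> (q, p) \<in> Rel W"
    proof (cases "fst p = fst q")
      case True
      then show ?thesis using p q unfolding Rel_def by auto
    next
      case False
      then have "olt W (fst p) (fst q) \<or> olt W (fst q) (fst p)"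
        using olt_total[OF W] p q Dom_fst by metis
      then show ?thesis using p q unfolding Rel_def by auto
    qed
  qed
  show "wf (Rel W - Id)" by (rule wf_Rel[OF W])
qed



locale strat2 = strat scale u for scale :: "'a::field \<Rightarrow> 'b::ab_group_add \<Rightarrow> 'b" (infixr "*s" 75) and u +
  fixes B :: "'b set"
  assumes indB: "independent B" and spB: "span B = UNIV" and uncB: "uncountable B"
    and ndom: "\<And>lam. \<not> dominant_eigenvalue scale u lam"
begin

abbreviation "W \<equiv> |B|"
abbreviation "Rs \<equiv> Rel W - Id"

lemma WO: "Well_order W" by (rule card_of_Well_order)
lemma FW: "Field W = B" by (rule Field_card_of)

definition Sset :: "('b option \<times> nat \<Rightarrow> 'b) \<Rightarrow> 'b option \<times> nat \<Rightarrow> 'b set" where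
  "Sset g p = {(u ^^ k) (g q) | q k. (q, p) \<in> Rs}"

definition H :: "('b option \<times> nat \<Rightarrow> 'b) \<Rightarrow> 'b option \<times> nat \<Rightarrow> 'b" where
  "H g p = (if (\<exists>b. p = (Some b, 0) \<and> b \<notin> span (Sset g p)) then the (fst p)
            else (SOME y. good (span (Sset g p)) y))"

definition xf :: "'b option \<times> nat \<Rightarrow> 'b" where
  "xf = wfrec Rs H"

lemma Sset_cut: "Sset (cut g Rs p) p = Sset g p"
  unfolding Sset_def cut_def by auto

lemma xf_eq: "xf p = H xf p"
proof -
  have "xf p = H (cut xf Rs p) p" unfolding xf_def by (rule wfrec[OF wf_Rel[OF WO]])
  also have "\<dots> = H xf p" unfolding H_def Sset_cut ..
  finally show ?thesis .
qed

abbreviation "Sx p \<equiv> Sset xf p"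

definition orb :: "'b \<Rightarrow> 'b set" where
  "orb z = {(u ^^ k) z | k. True}"

lemma Sx_inv: "u ` Sx p \<subseteq> Sx p"
proof
  fix v assume "v \<in> u ` Sx p"
  then obtain q k where "v = u ((u ^^ k) (xf q))" "(q, p) \<in> Rs" unfolding Sset_def by blast
  then have "v = (u ^^ Suc k) (xf q)" "(q, p) \<in> Rs" by simp_all
  then show "v \<in> Sx p" unfolding Sset_def by blast
qed

lemma orb_inv: "u ` orb z \<subseteq> orb z"
proof
  fix v assume "v \<in> u ` orb z"
  then obtain k where "v = u ((u ^^ k) z)" unfolding orb_def by blast
  then have "v = (u ^^ Suc k) z" by simp
  then show "v \<in> orb z" unfolding orb_def by blast
qed

lemma infB: "infinite B" using uncB countable_finite by blast

lemma T_small: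
  assumes "p \<in> Dom W"
  shows "|case fst p of None \<Rightarrow> {} | Some b \<Rightarrow> under W b| <o |B|"
proof (cases "fst p")
  case None
  have "finite ({}::'b set)" by simp
  then show ?thesis using None by (simp add: finite_ordLess_infinite2[OF _ infB])
next
  case (Some b)
  then have bB: "b \<in> Field W" using assms unfolding Dom_def by simp
  have "|underS W b| <o W" by (rule card_of_underS[OF card_of_Card_order bB])
  then have i: "|insert b (underS W b)| <o |B|" by (rule card_insert_less[OF _ infB])
  have "under W b \<subseteq> insert b (underS W b)" unfolding under_def underS_def by blast
  then have "|under W b| \<le>o |insert b (underS W b)|" by (rule card_of_mono1)
  then have "|under W b| <o |B|" using i by (rule ordLeq_ordLess_trans)
  then show ?thesis using Some by simp
qed

lemma pred_sub:
  assumes "(q, p) \<in> Rs"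
  shows "(q, k) \<in> AT (case fst p of None \<Rightarrow> {} | Some b \<Rightarrow> under W b)"
proof -
  have h: "q \<in> Dom W" "p \<in> Dom W" "olt W (fst q) (fst p) \<or> fst q = fst p"
    using assms unfolding Rel_strict by auto
  show ?thesis
  proof (cases "fst q")
    case None
    then show ?thesis unfolding AT_def by (cases q) auto
  next
    case (Some c)
    have cF: "c \<in> Field W" using h(1) Some unfolding Dom_def by simp
    obtain b where pb: "fst p = Some b" and cb: "(c, b) \<in> W"
    proof (cases "fst q = fst p")
      case True
      from cF have cc: "(c, c) \<in> W" using wo_props(5)[OF WO] unfolding refl_on_def by blast
      have "fst p = Some c" using True Some by simp
      then show ?thesis by (rule that[OF _ cc])
    next
      case False
      then have "olt W (fst q) (fst p)" using h(3) by simp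
      then show ?thesis using that Some unfolding olt_def by auto
    qed
    then show ?thesis using Some unfolding AT_def under_def by (cases q) auto
  qed
qed

lemma Sx_small:
  assumes "p \<in> Dom W"
  shows "|Sx p| <o |B|"
proof -
  let ?T = "case fst p of None \<Rightarrow> {} | Some b \<Rightarrow> under W b"
  let ?f = "\<lambda>(q, k). (u ^^ k) (xf q)"
  have "Sx p \<subseteq> ?f ` ({q. (q, p) \<in> Rs} \<times> UNIV)" unfolding Sset_def by auto
  then have a: "|Sx p| \<le>o |?f ` ({q. (q, p) \<in> Rs} \<times> UNIV)|" by (rule card_of_mono1)
  have b: "|?f ` ({q. (q, p) \<in> Rs} \<times> UNIV)| \<le>o |{q. (q, p) \<in> Rs} \<times> (UNIV::nat set)|"
    by (rule card_of_image)
  have "{q. (q, p) \<in> Rs} \<times> (UNIV::nat set) \<subseteq> AT ?T" using pred_sub by blast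
  then have c: "|{q. (q, p) \<in> Rs} \<times> (UNIV::nat set)| \<le>o |AT ?T|" by (rule card_of_mono1)
  have d: "|AT ?T| <o |B|" by (rule AT_less[OF T_small[OF assms] uncB])
  show ?thesis by (rule ordLeq_ordLess_trans[OF ordLeq_transitive[OF a ordLeq_transitive[OF b c]] d])
qed

lemma good_ex:
  assumes "p \<in> Dom W"
  shows "\<exists>y. good (span (Sx p)) y"
  by (rule exists_good[OF indB spB ndom Sx_small[OF assms] Sx_inv])

lemma good_not_in:
  assumes "good N y" shows "y \<notin> N"
proof
  assume yN: "y \<in> N"
  have ne: "y \<noteq> u y" and im: "indep_mod scale N {y, u y}" using assms unfolding good_def by auto
  let ?c = "\<lambda>s. if s = y then (1::'a) else 0"
  have "(\<Sum>s\<in>{y, u y}. ?c s *s s) = y" using ne by simp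
  then have "(\<Sum>s\<in>{y, u y}. ?c s *s s) \<in> N" using yN by simp
  moreover have "(\<Sum>s\<in>{y, u y}. ?c s *s s) \<in> N \<longrightarrow> (\<forall>s\<in>{y, u y}. ?c s = 0)"
    using im unfolding indep_mod_def by (elim conjE allE)
  ultimately show False by simp
qed

lemma xf_prop:
  assumes "p \<in> Dom W"
  shows "xf p \<notin> span (Sx p)"
    and "\<not> (\<exists>b. p = (Some b, 0)) \<Longrightarrow> good (span (Sx p)) (xf p)"
    and "p = (Some b, 0) \<Longrightarrow> b \<in> span (Sx p) \<or> xf p = b"
proof -
  have sg: "good (span (Sx p)) (SOME y. good (span (Sx p)) y)"
    using good_ex[OF assms] by (rule someI_ex)
  show "xf p \<notin> span (Sx p)"
  proof (cases "\<exists>b. p = (Some b, 0) \<and> b \<notin> span (Sx p)")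
    case True
    then obtain b where "p = (Some b, 0)" "b \<notin> span (Sx p)" by blast
    then show ?thesis using xf_eq[of p] unfolding H_def by auto
  next
    case False
    then have "xf p = (SOME y. good (span (Sx p)) y)" using xf_eq[of p] unfolding H_def by auto
    then show ?thesis using good_not_in[OF sg] by simp
  qed
  show "\<not> (\<exists>b. p = (Some b, 0)) \<Longrightarrow> good (span (Sx p)) (xf p)"
  proof -
    assume "\<not> (\<exists>b. p = (Some b, 0))"
    then have "xf p = (SOME y. good (span (Sx p)) y)" using xf_eq[of p] unfolding H_def by auto
    then show ?thesis using sg by simp
  qed
  show "p = (Some b, 0) \<Longrightarrow> b \<in> span (Sx p) \<or> xf p = b"
    using xf_eq[of p] unfolding H_def by auto
qed

end


context strat2
begin

definition Mf :: "'b option \<times> nat \<Rightarrow> 'b set" where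
  "Mf p = span (Sx p \<union> orb (xf p))"

lemma Rs_trans:
  assumes "(a, b) \<in> Rs" "(b, c) \<in> Rs"
  shows "(a, c) \<in> Rs"
proof -
  have wo: "Well_order (Rel W)" by (rule Well_order_Rel[OF WO])
  have tr: "trans (Rel W)" and an: "antisym (Rel W)" using wo_props[OF wo] by auto
  have "(a, c) \<in> Rel W" using assms tr unfolding trans_def by blast
  moreover have "a \<noteq> c"
  proof
    assume "a = c"
    then have "(a, b) \<in> Rel W" "(b, a) \<in> Rel W" using assms by auto
    then have "a = b" using an unfolding antisym_def by blast
    with assms(1) show False by simp
  qed
  ultimately show ?thesis by simp
qed

lemma Sx_mono:
  assumes "(q, p) \<in> Rs"
  shows "Sx q \<union> orb (xf q) \<subseteq> Sx p"
proof
  fix v assume "v \<in> Sx q \<union> orb (xf q)"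
  then show "v \<in> Sx p"
  proof
    assume "v \<in> Sx q"
    then obtain r k where "v = (u ^^ k) (xf r)" "(r, q) \<in> Rs" unfolding Sset_def by blast
    then show ?thesis using Rs_trans[OF _ assms] unfolding Sset_def by blast
  next
    assume "v \<in> orb (xf q)"
    then obtain k where "v = (u ^^ k) (xf q)" unfolding orb_def by blast
    then show ?thesis using assms unfolding Sset_def by blast
  qed
qed

lemma orb_self: "z \<in> orb z"
proof -
  have "z = (u ^^ 0) z" by simp
  then show ?thesis unfolding orb_def by blast
qed

lemma orb_u: "u z \<in> orb z"
proof -
  have "u z = (u ^^ 1) z" by simp
  then show ?thesis unfolding orb_def by blast
qed

lemma NE:
  "msum scale {Mf \<beta> | \<beta>. \<beta> \<in> Field (Rel W) \<and> (\<beta>, p) \<in> Rel W \<and> \<beta> \<noteq> p} = span (Sx p)"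
  unfolding msum_def
proof
  let ?F = "{Mf \<beta> | \<beta>. \<beta> \<in> Field (Rel W) \<and> (\<beta>, p) \<in> Rel W \<and> \<beta> \<noteq> p}"
  have "\<Union>?F \<subseteq> span (Sx p)"
  proof
    fix v assume "v \<in> \<Union>?F"
    then obtain \<beta> where b: "(\<beta>, p) \<in> Rs" "v \<in> Mf \<beta>" by blast
    have "Mf \<beta> \<subseteq> span (Sx p)" unfolding Mf_def by (rule span_mono[OF Sx_mono[OF b(1)]])
    with b show "v \<in> span (Sx p)" by blast
  qed
  then show "span (\<Union>?F) \<subseteq> span (Sx p)" by (rule span_minimal[OF _ subspace_span])
  have "Sx p \<subseteq> \<Union>?F"
  proof
    fix v assume "v \<in> Sx p"
    then obtain q k where v: "v = (u ^^ k) (xf q)" and q: "(q, p) \<in> Rs" unfolding Sset_def by blast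
    have "q \<in> Field (Rel W)" using q by (blast intro: FieldI1)
    moreover have "v \<in> Mf q" unfolding Mf_def v orb_def by (rule span_base) blast
    ultimately show "v \<in> \<Union>?F" using q by blast
  qed
  then show "span (Sx p) \<subseteq> span (\<Union>?F)" by (rule span_mono)
qed

lemma Mf_span_eq: "span (span (Sx p) \<union> orb (xf p)) = Mf p"
  unfolding Mf_def
proof
  have "span (Sx p) \<union> orb (xf p) \<subseteq> span (Sx p \<union> orb (xf p))"
    using span_mono[of "Sx p" "Sx p \<union> orb (xf p)"] span_superset[of "Sx p \<union> orb (xf p)"] by blast
  then show "span (span (Sx p) \<union> orb (xf p)) \<subseteq> span (Sx p \<union> orb (xf p))"
    by (rule span_minimal[OF _ subspace_span])
  have "Sx p \<union> orb (xf p) \<subseteq> span (Sx p) \<union> orb (xf p)" using span_superset by blast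
  then show "span (Sx p \<union> orb (xf p)) \<subseteq> span (span (Sx p) \<union> orb (xf p))" by (rule span_mono)
qed

end


context strat2
begin

lemma not_limit_good:
  assumes a: "\<alpha> \<in> Dom W"
    and ms: "is_minimum (Rel W) \<alpha> \<or> (\<exists>\<beta>\<in>Field (Rel W). is_successor (Rel W) \<alpha> \<beta>)"
  shows "\<not> (\<exists>b. \<alpha> = (Some b, 0))"
proof
  assume "\<exists>b. \<alpha> = (Some b, 0)"
  then obtain b where ab: "\<alpha> = (Some b, 0)" by blast
  from ms show False
  proof
    assume "is_minimum (Rel W) \<alpha>"
    moreover have "(None, 0) \<in> Field (Rel W)" unfolding Field_Rel Dom_def by simp
    ultimately have "(\<alpha>, (None, 0)) \<in> Rel W" unfolding is_minimum_def by blast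
    then show False unfolding ab Rel_def olt_def by auto
  next
    assume "\<exists>\<beta>\<in>Field (Rel W). is_successor (Rel W) \<alpha> \<beta>"
    then obtain \<beta> where bF: "\<beta> \<in> Field (Rel W)" and s: "is_successor (Rel W) \<alpha> \<beta>" by blast
    obtain a' m where bet: "\<beta> = (a', m)" by (cases \<beta>)
    have "(\<beta>, \<alpha>) \<in> Rs" using s unfolding is_successor_def by blast
    then have ol: "olt W a' (Some b)" unfolding Rel_strict bet ab by auto
    let ?g = "(a', Suc m)"
    have gF: "?g \<in> Field (Rel W)" using bF unfolding Field_Rel bet Dom_def by simp
    have bD: "\<beta> \<in> Dom W" "?g \<in> Dom W" using bF gF Field_Rel by auto
    have "(\<beta>, ?g) \<in> Rel W" using bD unfolding bet Rel_def by simp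
    moreover have "\<beta> \<noteq> ?g" unfolding bet by simp
    ultimately have "(\<alpha>, ?g) \<in> Rel W" using s gF unfolding is_successor_def by blast
    then have "olt W (Some b) a' \<or> Some b = a'" unfolding ab Rel_def by auto
    then show False using olt_asym[OF WO ol] ol olt_irrefl by metis
  qed
qed

lemma strat_dim_ge2:
  assumes "\<alpha> \<in> Dom W" "good (span (Sx \<alpha>)) (xf \<alpha>)"
  shows "strat_dim scale (Rel W) Mf \<alpha> \<ge> 2"
proof -
  let ?S = "{xf \<alpha>, u (xf \<alpha>)}"
  have ne: "xf \<alpha> \<noteq> u (xf \<alpha>)" and im: "indep_mod scale (span (Sx \<alpha>)) ?S"
    using assms(2) unfolding good_def by auto
  have sub: "?S \<subseteq> Mf \<alpha>" unfolding Mf_def using orb_self orb_u span_superset by blast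
  have c: "card ?S = 2" using ne by simp
  have "enat (card ?S) \<in> {enat (card S) | S. S \<subseteq> Mf \<alpha> \<and> indep_mod scale (span (Sx \<alpha>)) S}"
    using sub im by blast
  then have "enat (card ?S) \<le> qdim scale (Mf \<alpha>) (span (Sx \<alpha>))" unfolding qdim_def by (rule Sup_upper)
  then show ?thesis unfolding strat_dim_def NE using c by (simp add: numeral_eq_enat)
qed

lemma NE': "msum scale {Mf \<beta> | \<beta>. \<beta> \<in> Dom W \<and> (\<beta>, p) \<in> Rel W \<and> \<beta> \<noteq> p} = span (Sx p)"
  using NE[of p] unfolding Field_Rel .

lemma main_good: "good_stratification scale u (Rel W) Mf"
  unfolding good_stratification_def stratification_def Let_def Field_Rel NE'
proof (intro conjI ballI impI)
  show "well_order_on (Dom W) (Rel W)" using Well_order_Rel[OF WO] unfolding Field_Rel .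
next
  fix \<alpha> assume "\<alpha> \<in> Dom W"
  show "submodule scale u (Mf \<alpha>)" unfolding submodule_def
  proof
    show "subspace (Mf \<alpha>)" unfolding Mf_def by simp
    have "u ` (Sx \<alpha> \<union> orb (xf \<alpha>)) \<subseteq> Sx \<alpha> \<union> orb (xf \<alpha>)" using Sx_inv orb_inv by blast
    then show "u ` Mf \<alpha> \<subseteq> Mf \<alpha>" unfolding Mf_def using span_inv by blast
  qed
next
  fix \<alpha> \<beta> assume "\<alpha> \<in> Dom W" "\<beta> \<in> Dom W" "(\<beta>, \<alpha>) \<in> Rel W"
  show "Mf \<beta> \<subseteq> Mf \<alpha>"
  proof (cases "\<beta> = \<alpha>")
    case False
    then have "(\<beta>, \<alpha>) \<in> Rs" using \<open>(\<beta>, \<alpha>) \<in> Rel W\<close> by simp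
    then have "Sx \<beta> \<union> orb (xf \<beta>) \<subseteq> Sx \<alpha> \<union> orb (xf \<alpha>)" using Sx_mono by blast
    then show ?thesis unfolding Mf_def by (rule span_mono)
  qed simp
next
  fix \<alpha> assume a: "\<alpha> \<in> Dom W"
  have "xf \<alpha> \<in> Mf \<alpha>" unfolding Mf_def using orb_self span_superset by blast
  then show "\<not> Mf \<alpha> \<subseteq> span (Sx \<alpha>)" using xf_prop(1)[OF a] by blast
  have "Mf \<alpha> = span (span (Sx \<alpha>) \<union> {(u ^^ k) (xf \<alpha>) | k. True})"
    using Mf_span_eq[of \<alpha>] unfolding orb_def by simp
  then show "monogenous_quot scale u (Mf \<alpha>) (span (Sx \<alpha>))"
    unfolding monogenous_quot_def using \<open>xf \<alpha> \<in> Mf \<alpha>\<close> by blast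
next
  have "B \<subseteq> \<Union> (Mf ` Dom W)"
  proof
    fix b assume b: "b \<in> B"
    let ?p = "(Some b, 0::nat)"
    have p: "?p \<in> Dom W" unfolding Dom_def using b FW by simp
    have d: "b \<in> span (Sx ?p) \<or> xf ?p = b" by (rule xf_prop(3)[OF p refl])
    have s1: "span (Sx ?p) \<subseteq> Mf ?p" unfolding Mf_def by (rule span_mono) blast
    have s2: "xf ?p \<in> Mf ?p" unfolding Mf_def using orb_self span_superset by blast
    have "b \<in> Mf ?p"
    proof (cases "b \<in> span (Sx ?p)")
      case True
      then show ?thesis using s1 by (rule rev_subsetD)
    next
      case False
      then have "xf ?p = b" using d by simp
      then show ?thesis using s2 by simp
    qed
    with p show "b \<in> \<Union> (Mf ` Dom W)" by blast
  qed
  then have "span B \<subseteq> span (\<Union> (Mf ` Dom W))" by (rule span_mono)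
  then show "msum scale (Mf ` Dom W) = UNIV" unfolding msum_def spB by blast
next
  fix \<alpha> assume a: "\<alpha> \<in> Dom W"
    and ms: "is_minimum (Rel W) \<alpha> \<or> (\<exists>\<beta>\<in>Dom W. is_successor (Rel W) \<alpha> \<beta>)"
  have "\<not> (\<exists>b. \<alpha> = (Some b, 0))" using not_limit_good[OF a] ms unfolding Field_Rel by blast
  then have "good (span (Sx \<alpha>)) (xf \<alpha>)" by (rule xf_prop(2)[OF a])
  then show "2 \<le> strat_dim scale (Rel W) Mf \<alpha>" by (rule strat_dim_ge2[OF a])
next
  fix \<alpha> assume a: "\<alpha> \<in> Dom W"
  obtain c n where an: "\<alpha> = (c, n)" by (cases \<alpha>)
  have d: "(c, Suc n) \<in> Dom W" using a unfolding an Dom_def by simp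
  have r: "(\<alpha>, (c, Suc n)) \<in> Rel W" using a d unfolding an Rel_def by simp
  have ne: "\<alpha> \<noteq> (c, Suc n)" unfolding an by simp
  show "\<exists>\<beta>\<in>Dom W. (\<alpha>, \<beta>) \<in> Rel W \<and> \<alpha> \<noteq> \<beta>"
  proof (rule bexI[where x="(c, Suc n)"])
    show "(\<alpha>, (c, Suc n)) \<in> Rel W \<and> \<alpha> \<noteq> (c, Suc n)" using r ne by simp
    show "(c, Suc n) \<in> Dom W" by (rule d)
  qed
qed

end


lemma transport:
  assumes gs: "good_stratification scale u r Mf" and inj: "inj_on f (Field r)"
  shows "good_stratification scale u (dir_image r f) (Mf \<circ> inv_into (Field r) f)"
proof -
  let ?r = "dir_image r f"
  let ?M = "Mf \<circ> inv_into (Field r) f"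
  have F: "Field ?r = f ` Field r" by (rule dir_image_Field)
  have EQ: "\<And>a b. a \<in> Field r \<Longrightarrow> b \<in> Field r \<Longrightarrow> f a = f b \<longleftrightarrow> a = b"
    using inj by (simp add: inj_on_eq_iff)
  have R: "\<And>a b. a \<in> Field r \<Longrightarrow> b \<in> Field r \<Longrightarrow> (f a, f b) \<in> ?r \<longleftrightarrow> (a, b) \<in> r"
  proof
    fix a b assume a: "a \<in> Field r" and b: "b \<in> Field r" and "(f a, f b) \<in> ?r"
    then obtain a' b' where "(f a, f b) = (f a', f b')" "(a', b') \<in> r" unfolding dir_image_def by blast
    moreover then have "a' \<in> Field r" "b' \<in> Field r" by (auto intro: FieldI1 FieldI2)
    ultimately show "(a, b) \<in> r" using EQ a b by auto
  next
    fix a b assume "(a, b) \<in> r"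
    then show "(f a, f b) \<in> ?r" unfolding dir_image_def by blast
  qed
  have G: "\<And>a. a \<in> Field r \<Longrightarrow> ?M (f a) = Mf a" using inj by simp
  have N: "\<And>\<alpha>. \<alpha> \<in> Field r \<Longrightarrow>
      {?M \<beta> | \<beta>. \<beta> \<in> Field ?r \<and> (\<beta>, f \<alpha>) \<in> ?r \<and> \<beta> \<noteq> f \<alpha>}
    = {Mf \<beta> | \<beta>. \<beta> \<in> Field r \<and> (\<beta>, \<alpha>) \<in> r \<and> \<beta> \<noteq> \<alpha>}"
  proof -
    fix \<alpha> assume a: "\<alpha> \<in> Field r"
    show "{?M \<beta> | \<beta>. \<beta> \<in> Field ?r \<and> (\<beta>, f \<alpha>) \<in> ?r \<and> \<beta> \<noteq> f \<alpha>}
      = {Mf \<beta> | \<beta>. \<beta> \<in> Field r \<and> (\<beta>, \<alpha>) \<in> r \<and> \<beta> \<noteq> \<alpha>}"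
    proof (rule equalityI; rule subsetI)
      fix X assume "X \<in> {?M \<beta> | \<beta>. \<beta> \<in> Field ?r \<and> (\<beta>, f \<alpha>) \<in> ?r \<and> \<beta> \<noteq> f \<alpha>}"
      then obtain \<beta>' where h: "X = ?M \<beta>'" "\<beta>' \<in> Field ?r" "(\<beta>', f \<alpha>) \<in> ?r" "\<beta>' \<noteq> f \<alpha>" by blast
      then obtain \<beta> where b: "\<beta> \<in> Field r" "\<beta>' = f \<beta>" using F by blast
      have "X = Mf \<beta>" using h(1) b G by simp
      moreover have "(\<beta>, \<alpha>) \<in> r" using h(3) b R a by simp
      moreover have "\<beta> \<noteq> \<alpha>" using h(4) b by blast
      ultimately show "X \<in> {Mf \<beta> | \<beta>. \<beta> \<in> Field r \<and> (\<beta>, \<alpha>) \<in> r \<and> \<beta> \<noteq> \<alpha>}" using b(1) by blast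
    next
      fix X assume "X \<in> {Mf \<beta> | \<beta>. \<beta> \<in> Field r \<and> (\<beta>, \<alpha>) \<in> r \<and> \<beta> \<noteq> \<alpha>}"
      then obtain \<beta> where h: "X = Mf \<beta>" "\<beta> \<in> Field r" "(\<beta>, \<alpha>) \<in> r" "\<beta> \<noteq> \<alpha>" by blast
      have "X = ?M (f \<beta>)" using h G by simp
      moreover have "f \<beta> \<in> Field ?r" using h(2) F by blast
      moreover have "(f \<beta>, f \<alpha>) \<in> ?r" using h R a by simp
      moreover have "f \<beta> \<noteq> f \<alpha>" using h EQ a by simp
      ultimately show "X \<in> {?M \<beta> | \<beta>. \<beta> \<in> Field ?r \<and> (\<beta>, f \<alpha>) \<in> ?r \<and> \<beta> \<noteq> f \<alpha>}" by blast
    qed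
  qed
  have SD: "\<And>\<alpha>. \<alpha> \<in> Field r \<Longrightarrow> strat_dim scale ?r ?M (f \<alpha>) = strat_dim scale r Mf \<alpha>"
    unfolding strat_dim_def using N G by simp
  have MIN: "\<And>\<alpha>. \<alpha> \<in> Field r \<Longrightarrow> is_minimum ?r (f \<alpha>) \<longleftrightarrow> is_minimum r \<alpha>"
    unfolding is_minimum_def F using R by auto
  have SUC: "\<And>\<alpha> \<beta>. \<alpha> \<in> Field r \<Longrightarrow> \<beta> \<in> Field r \<Longrightarrow> is_successor ?r (f \<alpha>) (f \<beta>) \<longleftrightarrow> is_successor r \<alpha> \<beta>"
    unfolding is_successor_def F using R EQ by auto
  have IM: "?M ` Field ?r = Mf ` Field r" unfolding F using G by (auto simp: image_iff)
  have wo: "Well_order r" and sm: "\<forall>\<alpha>\<in>Field r. submodule scale u (Mf \<alpha>)"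
    and mo: "\<forall>\<alpha>\<in>Field r. \<forall>\<beta>\<in>Field r. (\<beta>, \<alpha>) \<in> r \<longrightarrow> Mf \<beta> \<subseteq> Mf \<alpha>"
    and qt: "\<forall>\<alpha>\<in>Field r. \<not> Mf \<alpha> \<subseteq> msum scale {Mf \<beta> | \<beta>. \<beta> \<in> Field r \<and> (\<beta>, \<alpha>) \<in> r \<and> \<beta> \<noteq> \<alpha>}
        \<and> monogenous_quot scale u (Mf \<alpha>) (msum scale {Mf \<beta> | \<beta>. \<beta> \<in> Field r \<and> (\<beta>, \<alpha>) \<in> r \<and> \<beta> \<noteq> \<alpha>})"
    and sp: "msum scale (Mf ` Field r) = UNIV"
    and dm: "\<forall>\<alpha>\<in>Field r. (is_minimum r \<alpha> \<or> (\<exists>\<beta>\<in>Field r. is_successor r \<alpha> \<beta>)) \<longrightarrow> strat_dim scale r Mf \<alpha> \<ge> 2"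
    and nm: "\<forall>\<alpha>\<in>Field r. \<exists>\<beta>\<in>Field r. (\<alpha>, \<beta>) \<in> r \<and> \<alpha> \<noteq> \<beta>"
    using gs unfolding good_stratification_def stratification_def Let_def by auto
  show ?thesis
    unfolding good_stratification_def stratification_def Let_def
  proof (intro conjI)
    show "Well_order ?r" by (rule Well_order_dir_image[OF wo inj])
    show "\<forall>\<alpha>\<in>Field ?r. submodule scale u (?M \<alpha>)" unfolding F using sm G by simp
    show "\<forall>\<alpha>\<in>Field ?r. \<forall>\<beta>\<in>Field ?r. (\<beta>, \<alpha>) \<in> ?r \<longrightarrow> ?M \<beta> \<subseteq> ?M \<alpha>"
      unfolding F using mo G R by simp
    show "\<forall>\<alpha>\<in>Field ?r. \<not> ?M \<alpha> \<subseteq> msum scale {?M \<beta> | \<beta>. \<beta> \<in> Field ?r \<and> (\<beta>, \<alpha>) \<in> ?r \<and> \<beta> \<noteq> \<alpha>}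
        \<and> monogenous_quot scale u (?M \<alpha>) (msum scale {?M \<beta> | \<beta>. \<beta> \<in> Field ?r \<and> (\<beta>, \<alpha>) \<in> ?r \<and> \<beta> \<noteq> \<alpha>})"
    proof
      fix \<alpha>' assume "\<alpha>' \<in> Field ?r"
      then obtain \<alpha> where a: "\<alpha> \<in> Field r" "\<alpha>' = f \<alpha>" using F by blast
      show "\<not> ?M \<alpha>' \<subseteq> msum scale {?M \<beta> | \<beta>. \<beta> \<in> Field ?r \<and> (\<beta>, \<alpha>') \<in> ?r \<and> \<beta> \<noteq> \<alpha>'}
        \<and> monogenous_quot scale u (?M \<alpha>') (msum scale {?M \<beta> | \<beta>. \<beta> \<in> Field ?r \<and> (\<beta>, \<alpha>') \<in> ?r \<and> \<beta> \<noteq> \<alpha>'})"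
        unfolding a(2) N[OF a(1)] G[OF a(1)] using qt a(1) by blast
    qed
    show "msum scale (?M ` Field ?r) = UNIV" unfolding IM by (rule sp)
    show "\<forall>\<alpha>\<in>Field ?r. (is_minimum ?r \<alpha> \<or> (\<exists>\<beta>\<in>Field ?r. is_successor ?r \<alpha> \<beta>)) \<longrightarrow> strat_dim scale ?r ?M \<alpha> \<ge> 2"
    proof
      fix \<alpha>' assume "\<alpha>' \<in> Field ?r"
      then obtain \<alpha> where a: "\<alpha> \<in> Field r" "\<alpha>' = f \<alpha>" using F by blast
      have "(\<exists>\<beta>\<in>Field ?r. is_successor ?r (f \<alpha>) \<beta>) \<longleftrightarrow> (\<exists>\<beta>\<in>Field r. is_successor r \<alpha> \<beta>)"
        unfolding F using SUC[OF a(1)] by auto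
      then show "(is_minimum ?r \<alpha>' \<or> (\<exists>\<beta>\<in>Field ?r. is_successor ?r \<alpha>' \<beta>)) \<longrightarrow> strat_dim scale ?r ?M \<alpha>' \<ge> 2"
        unfolding a(2) MIN[OF a(1)] SD[OF a(1)] using dm a(1) by blast
    qed
    show "\<forall>\<alpha>\<in>Field ?r. \<exists>\<beta>\<in>Field ?r. (\<alpha>, \<beta>) \<in> ?r \<and> \<alpha> \<noteq> \<beta>"
      unfolding F using nm R EQ by fastforce
  qed
qed


theorem proposition4:
  fixes scale :: "'a::field \<Rightarrow> 'b::ab_group_add \<Rightarrow> 'b"
    and u :: "'b \<Rightarrow> 'b"
  assumes "vector_space scale"
    and "\<exists>B. basis_of scale UNIV B \<and> uncountable B"
    and "Vector_Spaces.linear scale scale u"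
    and "\<forall>lam. \<not> dominant_eigenvalue scale u lam"
  shows "\<exists>(r :: ('b \<times> 'b) set) Mf. good_stratification scale u r Mf"
proof -
  from assms(2) obtain B where bB: "basis_of scale UNIV B" and uB: "uncountable B" by blast
  interpret S: strat2 scale u B
    using assms(1) assms(3) assms(4) bB uB
    unfolding strat2_def strat_def strat_axioms_def strat2_axioms_def basis_of_def by auto
  have g: "good_stratification scale u (Rel (card_of B)) S.Mf" by (rule S.main_good)
  have infB: "infinite B" using uB countable_finite by blast
  have "\<exists>f. inj_on f (Dom (card_of B)) \<and> f ` Dom (card_of B) \<subseteq> AT B"
  proof (intro exI conjI)
    show "inj_on (\<lambda>p. (p, 0::nat)) (Dom (card_of B))" by (rule inj_onI) simp
    show "(\<lambda>p. (p, 0::nat)) ` Dom (card_of B) \<subseteq> AT B"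
    proof
      fix z assume "z \<in> (\<lambda>p. (p, 0::nat)) ` Dom (card_of B)"
      then obtain a n where z: "z = ((a, n), 0)" and d: "(a, n) \<in> Dom (card_of B)" by auto
      have "a \<in> insert None (Some ` B)" using d unfolding Dom_def by (cases a) auto
      then show "z \<in> AT B" unfolding z AT_def by simp
    qed
  qed
  then have c1: "card_of (Dom (card_of B)) \<le>o card_of (AT B)" by (rule card_of_ordLeq[THEN iffD1])
  have c2: "card_of B \<le>o card_of (UNIV :: 'b set)" by (rule card_of_mono1) simp
  have "card_of (Dom (card_of B)) \<le>o card_of (UNIV :: 'b set)"
    by (rule ordLeq_transitive[OF c1 ordLeq_transitive[OF AT_le[OF infB] c2]])
  then have "\<exists>f. inj_on f (Dom (card_of B)) \<and> f ` Dom (card_of B) \<subseteq> (UNIV :: 'b set)" by (rule card_of_ordLeq[THEN iffD2])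
  then obtain f :: "'b option \<times> nat \<Rightarrow> 'b" where inj: "inj_on f (Dom (card_of B))" by blast
  then have inj': "inj_on f (Field (Rel (card_of B)))" unfolding Field_Rel .
  have "good_stratification scale u (dir_image (Rel (card_of B)) f) (S.Mf \<circ> inv_into (Field (Rel (card_of B))) f)"
    by (rule transport[OF g inj'])
  then show ?thesis by blast
qed

end
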